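(* Let $s\geq 2$ be an integer. Among the complete graphs $K_m$ with $m\geq s+2$, there are exactly $s-1$ for which there exists a function $g:A\to B$ with $|g(A)|=s$ and $fix(K_m)=fix(F_{K_m})$; namely these are $K_{s+2},K_{s+3},\dots,K_{2s}$.
   Context: A set $S\subseteq V(H)$ is a fixing set of a graph $H$ if the only automorphism of $H$ fixing every vertex of $S$ is the identity; $fix(H)$ is the minimum cardinality of a fixing set of $H$. Functigraph: let $G_1,G_2$ be disjoint copies of a connected graph $G$, with $A=V(G_1)$, $B=V(G_2)$, and let $g:A\to B$ be a function. The functigraph $F_G$ has vertex set $A\cup B$ and edge set $E(G_1)\cup E(G_2)\cup\{ug(u):u\in A\}$. *)

theory Defs
  imports Main
begin

text \<open>Automorphisms are bijections of V preserving adjacency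
and non-adjacency; two automorphisms are identified if they agree on V.\<close>

definition automorphism :: "'a set \<Rightarrow> ('a \<Rightarrow> 'a \<Rightarrow> bool) \<Rightarrow> ('a \<Rightarrow> 'a) \<Rightarrow> bool" where
  "automorphism V E \<sigma> \<longleftrightarrow> bij_betw \<sigma> V V \<and>
     (\<forall>x\<in>V. \<forall>y\<in>V. E x y \<longleftrightarrow> E (\<sigma> x) (\<sigma> y))"

definition fixing_set :: "'a set \<Rightarrow> ('a \<Rightarrow> 'a \<Rightarrow> bool) \<Rightarrow> 'a set \<Rightarrow> bool" where
  "fixing_set V E S \<longleftrightarrow> S \<subseteq> V \<and>
     (\<forall>\<sigma>. automorphism V E \<sigma> \<and> (\<forall>x\<in>S. \<sigma> x = x) \<longrightarrow> (\<forall>x\<in>V. \<sigma> x = x))"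

definition fix_number :: "'a set \<Rightarrow> ('a \<Rightarrow> 'a \<Rightarrow> bool) \<Rightarrow> nat" where
  "fix_number V E = (LEAST n. \<exists>S. fixing_set V E S \<and> card S = n)"

definition K_verts :: "nat \<Rightarrow> nat set" where
  "K_verts m = {0..<m}"

definition K_edge :: "nat \<Rightarrow> nat \<Rightarrow> bool" where
  "K_edge x y \<longleftrightarrow> x \<noteq> y"

text \<open>Functigraph of (V,E) with respect to g : A \<rightarrow> B, where A = Inl ` V is
the first copy and B = Inr ` V the second copy; g is given as a map V \<rightarrow> V
(Inl x is sent to Inr (g x)).\<close>

definition fg_verts :: "'a set \<Rightarrow> ('a + 'a) set" where
  "fg_verts V = Inl ` V \<union> Inr ` V"

fun fg_edge :: "('a \<Rightarrow> 'a \<Rightarrow> bool) \<Rightarrow> ('a \<Rightarrow> 'a) \<Rightarrow> 'a + 'a \<Rightarrow> 'a + 'a \<Rightarrow> bool" where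
  "fg_edge E g (Inl x) (Inl y) = E x y"
| "fg_edge E g (Inr x) (Inr y) = E x y"
| "fg_edge E g (Inl x) (Inr y) = (y = g x)"
| "fg_edge E g (Inr y) (Inl x) = (y = g x)"

end

theory Submission
  imports Defs
begin


definition sw :: "'b \<Rightarrow> 'b \<Rightarrow> 'b \<Rightarrow> 'b" where
  "sw a b x = (if x = a then b else if x = b then a else x)"

lemma sw_bij: "a \<in> A \<Longrightarrow> b \<in> A \<Longrightarrow> bij_betw (sw a b) A A"
  by (rule bij_betw_byWitness[where f'="sw a b"]) (auto simp: sw_def)

lemma fix_number_eq:
  assumes "fixing_set V E S0" "card S0 = n" "\<And>S. fixing_set V E S \<Longrightarrow> n \<le> card S"
  shows "fix_number V E = n"
  unfolding fix_number_def
  by (rule Least_equality) (use assms in auto)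

lemma fixing_set_self: "fixing_set V E V"
  by (simp add: fixing_set_def)

lemma fix_number_ge:
  assumes "\<And>S. fixing_set V E S \<Longrightarrow> n \<le> card S"
  shows "n \<le> fix_number V E"
proof -
  have "\<exists>k. \<exists>S. fixing_set V E S \<and> card S = k" using fixing_set_self by blast
  then have "\<exists>S. fixing_set V E S \<and> card S = fix_number V E"
    unfolding fix_number_def by (rule LeastI_ex)
  then obtain S where "fixing_set V E S" "card S = fix_number V E" by blast
  then show ?thesis using assms[of S] by simp
qed

lemma fixing_set_hit:
  assumes "fixing_set V E S" "automorphism V E \<sigma>" "\<forall>x\<in>S. \<sigma> x = x" "v \<in> V" "\<sigma> v \<noteq> v"
  shows False
  using assms unfolding fixing_set_def by blast

lemma sw_hit:
  assumes "fixing_set V E S" "automorphism V E (sw a b)" "a \<noteq> b" "a \<in> V"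
  shows "a \<in> S \<or> b \<in> S"
proof (rule ccontr)
  assume "\<not> (a \<in> S \<or> b \<in> S)"
  then have "\<forall>x\<in>S. sw a b x = x" by (auto simp: sw_def)
  moreover have "sw a b a \<noteq> a" using assms(3) by (simp add: sw_def)
  ultimately show False using fixing_set_hit[OF assms(1,2)] assms(4) by blast
qed

lemma K_aut: "a \<in> K_verts m \<Longrightarrow> b \<in> K_verts m \<Longrightarrow> automorphism (K_verts m) K_edge (sw a b)"
  unfolding automorphism_def by (auto simp: sw_bij K_edge_def sw_def)

lemma sw_Inl_Inl: "sw (Inl a) (Inl b) (Inl x) = Inl (sw a b x)" "sw (Inl a) (Inl b) (Inr y) = Inr y"
  by (auto simp: sw_def)
lemma sw_Inr_Inr: "sw (Inr a) (Inr b) (Inr x) = Inr (sw a b x)" "sw (Inr a) (Inr b) (Inl y) = Inl y"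
  by (auto simp: sw_def)

lemma L1: "a \<in> V \<Longrightarrow> b \<in> V \<Longrightarrow> g a = g b \<Longrightarrow>
   automorphism (fg_verts V) (fg_edge K_edge g) (sw (Inl a) (Inl b))"
  unfolding automorphism_def
  apply (intro conjI sw_bij)
    apply (auto simp: fg_verts_def)[2]
  apply (intro ballI)
  subgoal for x y
    apply (cases x; cases y)
       apply (simp_all add: sw_Inl_Inl K_edge_def)
     apply (auto simp: sw_def)
    done
  done

lemma L2: "a \<in> V \<Longrightarrow> b \<in> V \<Longrightarrow> a \<notin> g ` V \<Longrightarrow> b \<notin> g ` V \<Longrightarrow>
   automorphism (fg_verts V) (fg_edge K_edge g) (sw (Inr a) (Inr b))"
  unfolding automorphism_def
  apply (intro conjI sw_bij)
    apply (auto simp: fg_verts_def)[2]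
  apply (intro ballI)
  subgoal for x y
    apply (cases x; cases y)
       apply (simp_all add: sw_Inr_Inr K_edge_def)
       apply (auto simp: sw_def fg_verts_def)
    done
  done

lemma L3_key:
  assumes "u \<in> V" "v \<in> V" "a \<in> V" "b \<in> V"
   "\<forall>x\<in>V. g x = g a \<longrightarrow> x = a" "\<forall>x\<in>V. g x = g b \<longrightarrow> x = b" "a \<noteq> b"
  shows "(sw (g a) (g b) v = g (sw a b u)) = (v = g u)"
proof -
  have gab: "g a \<noteq> g b" using assms by blast
  show ?thesis
  proof (cases "u = a")
    case True then show ?thesis using gab by (auto simp: sw_def)
  next
    case ua: False
    show ?thesis
    proof (cases "u = b")
      case True then show ?thesis using gab ua by (auto simp: sw_def)
    next
      case False
      then have "sw a b u = u" "g u \<noteq> g a" "g u \<noteq> g b" using ua assms by (auto simp: sw_def)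
      then show ?thesis by (auto simp: sw_def)
    qed
  qed
qed

lemma L3: "a \<in> V \<Longrightarrow> b \<in> V \<Longrightarrow> g a \<in> V \<Longrightarrow> g b \<in> V \<Longrightarrow>
   \<forall>x\<in>V. g x = g a \<longrightarrow> x = a \<Longrightarrow> \<forall>x\<in>V. g x = g b \<longrightarrow> x = b \<Longrightarrow> a \<noteq> b \<Longrightarrow>
   automorphism (fg_verts V) (fg_edge K_edge g) (sw (Inl a) (Inl b) \<circ> sw (Inr (g a)) (Inr (g b)))"
  unfolding automorphism_def
  apply (intro conjI)
   apply (rule bij_betw_trans[of _ _ "fg_verts V"]; rule sw_bij)
      apply (auto simp: fg_verts_def)[4]
  apply (intro ballI)
  subgoal for x y
    apply (cases x; cases y)
       apply (simp_all add: sw_Inr_Inr sw_Inl_Inl K_edge_def)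
    subgoal for u v
      by (auto simp: sw_def)
    subgoal for u v using L3_key[of u V v a b g] by (auto simp: fg_verts_def)
    subgoal for u v using L3_key[of v V u a b g] by (auto simp: fg_verts_def)
    subgoal for u v
      by (auto simp: sw_def)
    done
  done



lemma card_sum_split:
  fixes S :: "('a + 'b) set"
  assumes "finite S"
  shows "card S = card {x. Inl x \<in> S} + card {y. Inr y \<in> S}"
proof -
  define A where "A = {x. Inl x \<in> S}"
  define B where "B = {x. Inr x \<in> S}"
  have fA: "finite A" using finite_vimageI[OF assms, of Inl] by (simp add: vimage_def A_def)
  have fB: "finite B" using finite_vimageI[OF assms, of Inr] by (simp add: vimage_def B_def)
  have eq: "S = Inl ` A \<union> Inr ` B"
    unfolding A_def B_def by (auto, metis imageI mem_Collect_eq sum.exhaust)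
  have d: "(Inl ` A :: ('a + 'b) set) \<inter> Inr ` B = {}" by blast
  have "card (Inl ` A \<union> Inr ` B) = card (Inl ` A :: ('a + 'b) set) + card (Inr ` B :: ('a + 'b) set)"
    using card_Un_disjoint[OF finite_imageI[OF fA] finite_imageI[OF fB] d] .
  moreover have "card (Inl ` A :: ('a + 'b) set) = card A" by (simp add: card_image)
  moreover have "card (Inr ` B :: ('a + 'b) set) = card B" by (simp add: card_image)
  ultimately have "card S = card A + card B" by (subst eq) simp
  then show ?thesis by (simp only: A_def B_def)
qed

lemma card_le1: "finite A \<Longrightarrow> (\<And>a b. a \<in> A \<Longrightarrow> b \<in> A \<Longrightarrow> a \<noteq> b \<Longrightarrow> False) \<Longrightarrow> card A \<le> 1"
  using card_le_Suc0_iff_eq[of A] by (auto simp: One_nat_def)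

lemma fixing_finite: "fixing_set V E S \<Longrightarrow> finite V \<Longrightarrow> finite S"
  unfolding fixing_set_def using finite_subset by blast

lemma fix_K:
  assumes "m \<ge> 1"
  shows "fix_number (K_verts m) K_edge = m - 1"
proof (rule fix_number_eq)
  show "fixing_set (K_verts m) K_edge {0..<m-1}"
    unfolding fixing_set_def
  proof (intro conjI allI impI)
    show "{0..<m - 1} \<subseteq> K_verts m" by (auto simp: K_verts_def)
    fix \<sigma> assume h: "automorphism (K_verts m) K_edge \<sigma> \<and> (\<forall>x\<in>{0..<m - 1}. \<sigma> x = x)"
    then have bij: "bij_betw \<sigma> (K_verts m) (K_verts m)" by (simp add: automorphism_def)
    have "\<sigma> (m-1) = m-1"
    proof (rule ccontr)
      assume ne: "\<sigma> (m-1) \<noteq> m-1"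
      have "\<sigma> (m-1) \<in> K_verts m" using bij assms by (auto simp: K_verts_def bij_betw_def)
      then have lt: "\<sigma> (m-1) < m-1" using ne by (auto simp: K_verts_def)
      then have "\<sigma> (\<sigma> (m-1)) = \<sigma> (m-1)" using h by auto
      then have "\<sigma> (m-1) = m-1"
        using bij_betw_imp_inj_on[OF bij] lt assms unfolding inj_on_def K_verts_def by auto
      then show False using ne by simp
    qed
    show "\<forall>x\<in>K_verts m. \<sigma> x = x"
    proof
      fix x assume "x \<in> K_verts m"
      then have "x < m - 1 \<or> x = m - 1" by (auto simp: K_verts_def)
      then show "\<sigma> x = x" using h \<open>\<sigma> (m-1) = m-1\<close> by auto
    qed
  qed
  show "card {0..<m-1} = m - 1" by simp
  fix S assume fs: "fixing_set (K_verts m) K_edge S"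
  then have sub: "S \<subseteq> K_verts m" by (simp add: fixing_set_def)
  have "card (K_verts m - S) \<le> 1"
  proof (rule card_le1)
    show "finite (K_verts m - S)" by (simp add: K_verts_def)
    fix a b assume ab: "a \<in> K_verts m - S" "b \<in> K_verts m - S" "a \<noteq> b"
    then show False using sw_hit[OF fs K_aut, of a b] by auto
  qed
  moreover have "card (K_verts m) = card S + card (K_verts m - S)"
    using sub by (metis card_Diff_subset finite_atLeastLessThan K_verts_def card_mono le_add_diff_inverse finite_subset)
  ultimately show "m - 1 \<le> card S" by (simp add: K_verts_def)
qed



lemma fs_sub: "fixing_set (fg_verts V) E S \<Longrightarrow> {x. Inl x \<in> S} \<subseteq> V \<and> {y. Inr y \<in> S} \<subseteq> V"
  unfolding fixing_set_def fg_verts_def by auto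

lemma inj_missing:
  assumes fs: "fixing_set (fg_verts V) (fg_edge K_edge g) S" and "W \<subseteq> V"
  shows "inj_on g (W - {x. Inl x \<in> S})"
  unfolding inj_on_def
proof (intro ballI impI)
  fix a b assume a: "a \<in> W - {x. Inl x \<in> S}" and b: "b \<in> W - {x. Inl x \<in> S}" and gab: "g a = g b"
  show "a = b"
  proof (rule ccontr)
    assume "a \<noteq> b"
    then have "Inl a \<in> S \<or> Inl b \<in> S"
      using sw_hit[OF fs L1[of a V b g]] a b gab assms(2) by (auto simp: fg_verts_def)
    then show False using a b by auto
  qed
qed

lemma nonimg_missing:
  assumes fs: "fixing_set (fg_verts V) (fg_edge K_edge g) S" and "finite V"
  shows "card ((V - g ` V) - {y. Inr y \<in> S}) \<le> 1"
proof (rule card_le1)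
  show "finite ((V - g ` V) - {y. Inr y \<in> S})" using assms(2) by simp
  fix a b assume a: "a \<in> (V - g ` V) - {y. Inr y \<in> S}" and b: "b \<in> (V - g ` V) - {y. Inr y \<in> S}" and "a \<noteq> b"
  then have "Inr a \<in> S \<or> Inr b \<in> S"
    using sw_hit[OF fs L2[of a V b g]] by (auto simp: fg_verts_def)
  then show False using a b by auto
qed

lemma fg_lower_general:
  assumes fs: "fixing_set (fg_verts V) (fg_edge K_edge g) S" and fin: "finite V" and gV: "g ` V \<subseteq> V"
  shows "card V - card (g ` V) + (card V - card (g ` V) - 1) \<le> card S"
proof -
  define SL where "SL = {x. Inl x \<in> S}"
  define SR where "SR = {y. Inr y \<in> S}"
  have SLV: "SL \<subseteq> V" and SRV: "SR \<subseteq> V" using fs_sub[OF fs] by (auto simp: SL_def SR_def)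
  have finS: "finite S" using fixing_finite[OF fs] fin by (simp add: fg_verts_def)
  have cS: "card S = card SL + card SR" using card_sum_split[OF finS] by (simp add: SL_def SR_def)
  have "card (V - SL) \<le> card (g ` V)"
    by (rule card_inj_on_le[OF inj_missing[OF fs, of V, folded SL_def]]) (use fin in auto)
  moreover have "card (V - SL) = card V - card SL" using SLV fin by (simp add: card_Diff_subset finite_subset)
  moreover have "card SL \<le> card V" using SLV fin by (simp add: card_mono)
  ultimately have 1: "card V - card (g ` V) \<le> card SL" by linarith
  define NI where "NI = V - g ` V"
  have cNI: "card NI = card V - card (g ` V)" unfolding NI_def using gV fin by (simp add: card_Diff_subset finite_subset)
  have "card (NI - SR) \<le> 1" using nonimg_missing[OF fs fin] by (simp add: NI_def SR_def)
  moreover have "card NI \<le> card (NI \<inter> SR) + card (NI - SR)"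
  proof -
    have "NI = (NI \<inter> SR) \<union> (NI - SR)" by blast
    then show ?thesis by (metis card_Un_le)
  qed
  moreover have "card (NI \<inter> SR) \<le> card SR" using SRV fin by (simp add: card_mono finite_subset)
  ultimately have 2: "card V - card (g ` V) - 1 \<le> card SR" using cNI by linarith
  show ?thesis using 1 2 cS by linarith
qed



definition gc :: "nat \<Rightarrow> nat \<Rightarrow> nat" where
  "gc p x = (if x \<le> 2 then 0 else if x \<le> p then x - 2 else x - p)"

lemma gc_img:
  assumes "2 \<le> p" "p \<le> s"
  shows "gc p ` {0..<s+p} = {0..<s}"
proof
  show "gc p ` {0..<s+p} \<subseteq> {0..<s}" using assms by (auto simp: gc_def)
  show "{0..<s} \<subseteq> gc p ` {0..<s+p}"
  proof
    fix y assume y: "y \<in> {0..<s}"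
    show "y \<in> gc p ` {0..<s+p}"
    proof (cases "y = 0")
      case True then show ?thesis using assms by (auto simp: gc_def intro!: image_eqI[of _ _ 0])
    next
      case False
      show ?thesis
      proof (cases "y \<le> p - 2")
        case True
        then show ?thesis using assms False y by (auto simp: gc_def intro!: image_eqI[of _ _ "y+2"])
      next
        case f2: False
        then show ?thesis using assms False y by (auto simp: gc_def intro!: image_eqI[of _ _ "y+p"])
      qed
    qed
  qed
qed

lemma gc_lower:
  assumes p2: "2 \<le> p" and ps: "p \<le> s"
    and fs: "fixing_set (fg_verts {0..<s+p}) (fg_edge K_edge (gc p)) S"
  shows "s + p - 1 \<le> card S"
proof -
  define V where "V = {0..<s+p}"
  define G where "G = gc p"
  note fs = fs[folded V_def G_def]
  define SL where "SL = {x. Inl x \<in> S}"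
  define SR where "SR = {y. Inr y \<in> S}"
  have fin: "finite V" by (simp add: V_def)
  have SLV: "SL \<subseteq> V" and SRV: "SR \<subseteq> V" using fs_sub[OF fs] by (auto simp: SL_def SR_def)
  have finS: "finite S" using fixing_finite[OF fs] fin by (simp add: fg_verts_def)
  have cS: "card S = card SL + card SR" using card_sum_split[OF finS] by (simp add: SL_def SR_def)
  have fSL: "finite SL" and fSR: "finite SR" using SLV SRV fin finite_subset by auto
  define X where "X = {0..<2*p-1}"
  define Y where "Y = {2*p-1..<s+p}"
  define NI where "NI = {s..<s+p}"
  define Z where "Z = {p-1..<s}"
  have XV: "X \<subseteq> V" using ps by (auto simp: X_def V_def)
  have "card (X - SL) \<le> card {0..<p-1}"
  proof (rule card_inj_on_le[OF inj_missing[OF fs XV, folded SL_def]])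
    show "G ` (X - SL) \<subseteq> {0..<p-1}" using p2 by (auto simp: X_def G_def gc_def)
  qed simp
  moreover have "card X \<le> card (X \<inter> SL) + card (X - SL)"
  proof -
    have "X = (X \<inter> SL) \<union> (X - SL)" by blast
    then show ?thesis by (metis card_Un_le)
  qed
  ultimately have cX: "p \<le> card (SL \<inter> X)" using p2 by (simp add: X_def Int_commute)
  have img: "G ` V = {0..<s}" using gc_img[OF p2 ps] by (simp add: G_def V_def)
  have "NI = V - {0..<s}" by (auto simp: NI_def V_def)
  then have NIeq: "NI = V - G ` V" by (simp only: img)
  have "card (NI - SR) \<le> 1" using nonimg_missing[OF fs fin] by (simp add: NIeq SR_def)
  moreover have "card NI \<le> card (NI \<inter> SR) + card (NI - SR)"
  proof -
    have "NI = (NI \<inter> SR) \<union> (NI - SR)" by blast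
    then show ?thesis by (metis card_Un_le)
  qed
  ultimately have cNI: "p - 1 \<le> card (SR \<inter> NI)" by (simp add: NI_def Int_commute)
  have gY: "x \<in> Y \<Longrightarrow> G x = x - p" for x using p2 by (auto simp: Y_def G_def gc_def)
  have fibY: "x \<in> Y \<Longrightarrow> \<forall>z\<in>V. G z = G x \<longrightarrow> z = x" for x
    using p2 by (auto simp: Y_def G_def gc_def V_def)
  have YV: "Y \<subseteq> V" by (auto simp: Y_def V_def)
  have GYV: "x \<in> Y \<Longrightarrow> G x \<in> V" for x using gY by (auto simp: Y_def V_def)
  define H where "H = {x\<in>Y. Inl x \<in> S \<or> Inr (x - p) \<in> S}"
  have "card (Y - H) \<le> 1"
  proof (rule card_le1)
    show "finite (Y - H)" by (simp add: Y_def)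
    fix a b assume a: "a \<in> Y - H" and b: "b \<in> Y - H" and ab: "a \<noteq> b"
    define \<sigma> where "\<sigma> = sw (Inl a) (Inl b) \<circ> sw (Inr (G a)) (Inr (G b))"
    have aut: "automorphism (fg_verts V) (fg_edge K_edge G) \<sigma>"
      unfolding \<sigma>_def
      by (rule L3) (use a b ab YV GYV fibY in auto)
    have nS: "Inl a \<notin> S" "Inl b \<notin> S" "Inr (G a) \<notin> S" "Inr (G b) \<notin> S"
      using a b gY by (auto simp: H_def)
    have "\<forall>v\<in>S. \<sigma> v = v"
    proof
      fix v assume "v \<in> S"
      then have "v \<noteq> Inl a" "v \<noteq> Inl b" "v \<noteq> Inr (G a)" "v \<noteq> Inr (G b)" using nS by auto
      then show "\<sigma> v = v" by (simp add: \<sigma>_def sw_def)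
    qed
    moreover have "\<sigma> (Inl a) \<noteq> Inl a" using ab by (simp add: \<sigma>_def sw_def)
    moreover have "Inl a \<in> fg_verts V" using a YV by (auto simp: fg_verts_def)
    ultimately show False using fixing_set_hit[OF fs aut] by blast
  qed
  moreover have "card Y \<le> card H + card (Y - H)"
  proof -
    have "Y = H \<union> (Y - H)" by (auto simp: H_def)
    then show ?thesis by (metis card_Un_le)
  qed
  moreover have "card H \<le> card (SL \<inter> Y) + card (SR \<inter> Z)"
  proof -
    have "H \<subseteq> (SL \<inter> Y) \<union> (\<lambda>y. y + p) ` (SR \<inter> Z)"
    proof
      fix x assume x: "x \<in> H"
      show "x \<in> (SL \<inter> Y) \<union> (\<lambda>y. y + p) ` (SR \<inter> Z)"
      proof (cases "Inl x \<in> S")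
        case True then show ?thesis using x by (auto simp: H_def SL_def)
      next
        case False
        then have "Inr (x - p) \<in> S" "x \<in> Y" using x by (auto simp: H_def)
        moreover have "x = (x - p) + p" "x - p \<in> Z" using \<open>x \<in> Y\<close> p2 by (auto simp: Y_def Z_def)
        ultimately show ?thesis by (auto simp: SR_def intro!: image_eqI[of _ _ "x - p"])
      qed
    qed
    then have "card H \<le> card ((SL \<inter> Y) \<union> (\<lambda>y. y + p) ` (SR \<inter> Z))"
      by (rule card_mono[rotated]) (use fSL fSR in auto)
    also have "\<dots> \<le> card (SL \<inter> Y) + card ((\<lambda>y. y + p) ` (SR \<inter> Z))" by (rule card_Un_le)
    also have "\<dots> \<le> card (SL \<inter> Y) + card (SR \<inter> Z)" using card_image_le fSR by auto
    finally show ?thesis .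
  qed
  moreover have "card Y = s + 1 - p" using p2 ps by (simp add: Y_def)
  ultimately have cY: "s - p \<le> card (SL \<inter> Y) + card (SR \<inter> Z)" by linarith
  have "card (SL \<inter> X) + card (SL \<inter> Y) = card ((SL \<inter> X) \<union> (SL \<inter> Y))"
    by (rule card_Un_disjoint[symmetric]) (use fSL in \<open>auto simp: X_def Y_def\<close>)
  also have "\<dots> \<le> card SL" by (rule card_mono[OF fSL]) auto
  finally have L: "card (SL \<inter> X) + card (SL \<inter> Y) \<le> card SL" .
  have "card (SR \<inter> NI) + card (SR \<inter> Z) = card ((SR \<inter> NI) \<union> (SR \<inter> Z))"
    by (rule card_Un_disjoint[symmetric]) (use fSR in \<open>auto simp: NI_def Z_def\<close>)
  also have "\<dots> \<le> card SR" by (rule card_mono[OF fSR]) auto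
  finally have R: "card (SR \<inter> NI) + card (SR \<inter> Z) \<le> card SR" .
  show ?thesis using L R cS cX cNI cY p2 ps by linarith
qed



lemma gc_upper_card:
  assumes p2: "2 \<le> p" and ps: "p \<le> s"
  shows "card (Inl ` ({1,2} \<union> ({p+1..<s+p} - {2*p-1})) \<union> Inr ` {s+1..<s+p}) = s + p - 1"
proof -
  have d: "({1,2} \<union> ({p+1..<s+p} - {2*p-1})) = {1,2} \<union> ({p+1..<s+p} - {2*p-1})" by simp
  have c1: "card ({p+1..<s+p} - {2*p-1}) = s - 2"
  proof -
    have "2*p-1 \<in> {p+1..<s+p}" using p2 ps by auto
    then have "card ({p+1..<s+p} - {2*p-1}) = card {p+1..<s+p} - 1" by (simp add: card_Diff_singleton)
    then show ?thesis using p2 ps by simp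
  qed
  have c2: "card ({1::nat,2} \<union> ({p+1..<s+p} - {2*p-1})) = 2 + (s - 2)"
    by (subst card_Un_disjoint) (use p2 c1 in auto)
  have "card (Inl ` ({1,2} \<union> ({p+1..<s+p} - {2*p-1})) \<union> Inr ` {s+1..<s+p}) =
        card (Inl ` ({1,2} \<union> ({p+1..<s+p} - {2*p-1})) :: (nat + nat) set) + card (Inr ` {s+1..<s+p} :: (nat + nat) set)"
    by (rule card_Un_disjoint) auto
  also have "\<dots> = card ({1::nat,2} \<union> ({p+1..<s+p} - {2*p-1})) + card {s+1..<s+p}"
    by (intro arg_cong2[where f="(+)"] card_image) (auto simp: inj_on_def)
  finally show ?thesis using c2 p2 ps by simp
qed



lemma gc_upper:
  assumes p2: "2 \<le> p" and ps: "p \<le> s"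
  shows "fixing_set (fg_verts {0..<s+p}) (fg_edge K_edge (gc p))
           (Inl ` ({1,2} \<union> ({p+1..<s+p} - {2*p-1})) \<union> Inr ` {s+1..<s+p})"
proof -
  define V where "V = {0..<s+p}"
  define G where "G = gc p"
  define SL0 where "SL0 = {1,2} \<union> ({p+1..<s+p} - {2*p-1})"
  define SR0 where "SR0 = {s+1..<s+p}"
  define E where "E = fg_edge K_edge G"
  have SLV: "SL0 \<subseteq> V" using ps p2 by (auto simp: SL0_def V_def)
  have SRV: "SR0 \<subseteq> V" by (auto simp: SR0_def V_def)
  have Gs: "x \<in> V \<Longrightarrow> G x < s" for x using p2 ps by (auto simp: G_def gc_def V_def)
  have GV: "x \<in> V \<Longrightarrow> G x \<in> V" for x using Gs[of x] by (simp add: V_def)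
  have compl: "x \<in> V \<Longrightarrow> x \<notin> SL0 \<Longrightarrow> x = 0 \<or> (3 \<le> x \<and> x \<le> p) \<or> x = 2*p-1" for x
    by (auto simp: SL0_def V_def)
  have compl_notin: "x \<notin> SL0" if "x = 0 \<or> (3 \<le> x \<and> x \<le> p) \<or> x = 2*p-1" for x
    using that p2 by (auto simp: SL0_def)
  have Ginj: "x \<in> V - SL0 \<Longrightarrow> y \<in> V - SL0 \<Longrightarrow> G x = G y \<Longrightarrow> x = y" for x y
  proof -
    assume x: "x \<in> V - SL0" and y: "y \<in> V - SL0" and e: "G x = G y"
    from compl[of x] compl[of y] x y
    have "(x = 0 \<or> (3 \<le> x \<and> x \<le> p) \<or> x = 2*p-1) \<and> (y = 0 \<or> (3 \<le> y \<and> y \<le> p) \<or> y = 2*p-1)" by auto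
    then show "x = y" using e p2 by (auto simp: G_def gc_def split: if_splits)
  qed
  have "fixing_set (fg_verts V) E (Inl ` SL0 \<union> Inr ` SR0)"
    unfolding fixing_set_def
  proof (intro conjI allI impI)
    show "Inl ` SL0 \<union> Inr ` SR0 \<subseteq> fg_verts V" using SLV SRV by (auto simp: fg_verts_def)
    fix \<sigma> assume h: "automorphism (fg_verts V) E \<sigma> \<and> (\<forall>x\<in>Inl ` SL0 \<union> Inr ` SR0. \<sigma> x = x)"
    then have bij: "bij_betw \<sigma> (fg_verts V) (fg_verts V)"
      and adj: "\<And>x y. x \<in> fg_verts V \<Longrightarrow> y \<in> fg_verts V \<Longrightarrow> E x y = E (\<sigma> x) (\<sigma> y)"
      and fL: "\<And>x. x \<in> SL0 \<Longrightarrow> \<sigma> (Inl x) = Inl x"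
      and fR: "\<And>x. x \<in> SR0 \<Longrightarrow> \<sigma> (Inr x) = Inr x"
      by (auto simp: automorphism_def)
    have inj: "\<And>v w. v \<in> fg_verts V \<Longrightarrow> w \<in> fg_verts V \<Longrightarrow> \<sigma> v = \<sigma> w \<Longrightarrow> v = w"
      using bij_betw_imp_inj_on[OF bij] unfolding inj_on_def by blast
    have maps: "\<And>v. v \<in> fg_verts V \<Longrightarrow> \<sigma> v \<in> fg_verts V"
      using bij by (simp add: bij_betw_apply)
    have inL: "x \<in> V \<Longrightarrow> Inl x \<in> fg_verts V" for x by (simp add: fg_verts_def)
    have inR: "x \<in> V \<Longrightarrow> Inr x \<in> fg_verts V" for x by (simp add: fg_verts_def)
    define r where "r = s + p - 1"
    have rS: "r \<in> SR0" and rV: "r \<in> V" using p2 by (auto simp: r_def SR0_def V_def)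
    have sr: "\<sigma> (Inr r) = Inr r" using fR[OF rS] .
    have sideL: "\<exists>x'\<in>V. \<sigma> (Inl x) = Inl x'" if x: "x \<in> V" for x
    proof -
      have "\<sigma> (Inl x) \<in> fg_verts V" using maps inL x by blast
      then consider x' where "x' \<in> V" "\<sigma> (Inl x) = Inl x'" | y where "y \<in> V" "\<sigma> (Inl x) = Inr y"
        by (auto simp: fg_verts_def)
      then show ?thesis
      proof cases
        case 1 then show ?thesis by blast
      next
        case (2 y)
        have e1: "\<not> E (Inl x) (Inr r)" using Gs[OF x] p2 by (auto simp: E_def r_def)
        have "y \<noteq> r"
        proof
          assume "y = r"
          then have "\<sigma> (Inl x) = \<sigma> (Inr r)" using 2 sr by simp
          then have "Inl x = Inr r" using inj inL inR x rV by blast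
          then show False by simp
        qed
        then have "E (\<sigma> (Inl x)) (\<sigma> (Inr r))" using 2 sr by (simp add: E_def K_edge_def)
        then show ?thesis using adj[OF inL[OF x] inR[OF rV]] e1 by simp
      qed
    qed
    have sideR: "\<exists>y'\<in>V. \<sigma> (Inr y) = Inr y'" if y: "y \<in> V" for y
    proof (cases "y = r")
      case True then show ?thesis using sr rV by blast
    next
      case False
      have "\<sigma> (Inr y) \<in> fg_verts V" using maps inR y by blast
      then consider y' where "y' \<in> V" "\<sigma> (Inr y) = Inr y'" | x where "x \<in> V" "\<sigma> (Inr y) = Inl x"
        by (auto simp: fg_verts_def)
      then show ?thesis
      proof cases
        case 1 then show ?thesis by blast
      next
        case (2 x)
        have e1: "E (Inr y) (Inr r)" using False by (simp add: E_def K_edge_def)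
        have "\<not> E (\<sigma> (Inr y)) (\<sigma> (Inr r))" using 2 sr Gs[of x] p2 by (auto simp: E_def r_def)
        then show ?thesis using adj[OF inR[OF y] inR[OF rV]] e1 by simp
      qed
    qed
    define \<pi> where "\<pi> x = projl (\<sigma> (Inl x))" for x
    define \<tau> where "\<tau> y = projr (\<sigma> (Inr y))" for y
    have \<pi>L: "\<sigma> (Inl x) = Inl (\<pi> x) \<and> \<pi> x \<in> V" if "x \<in> V" for x
      using sideL[OF that] by (auto simp: \<pi>_def)
    have \<tau>R: "\<sigma> (Inr y) = Inr (\<tau> y) \<and> \<tau> y \<in> V" if "y \<in> V" for y
      using sideR[OF that] by (auto simp: \<tau>_def)
    have \<pi>inj: "x = y" if "x \<in> V" "y \<in> V" "\<pi> x = \<pi> y" for x y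
      using inj[OF inL[OF that(1)] inL[OF that(2)]] \<pi>L that by auto
    have \<tau>inj: "x = y" if "x \<in> V" "y \<in> V" "\<tau> x = \<tau> y" for x y
      using inj[OF inR[OF that(1)] inR[OF that(2)]] \<tau>R that by auto
    have comp: "\<tau> (G x) = G (\<pi> x)" if x: "x \<in> V" for x
    proof -
      have "E (Inl x) (Inr (G x))" by (simp add: E_def)
      then have "E (\<sigma> (Inl x)) (\<sigma> (Inr (G x)))" using adj[OF inL[OF x] inR[OF GV[OF x]]] by simp
      then show ?thesis using \<pi>L[OF x] \<tau>R[OF GV[OF x]] by (simp add: E_def)
    qed
    have \<pi>S: "\<pi> x = x" if "x \<in> SL0" for x using fL[OF that] by (simp add: \<pi>_def)
    have \<tau>S: "\<tau> y = y" if "y \<in> SR0" for y using fR[OF that] by (simp add: \<tau>_def)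
    have \<tau>1: "\<tau> y = y" if y: "y \<in> V" "y \<noteq> p - 1" "y \<noteq> s" for y
    proof (cases "y > s")
      case True then show ?thesis using \<tau>S y by (auto simp: SR0_def V_def)
    next
      case False
      then have ys: "y < s" using y by simp
      define x where "x = (if y = 0 then 1 else y + p)"
      have xS: "x \<in> SL0" using ys y p2 by (auto simp: x_def SL0_def)
      have Gx: "G x = y" using p2 by (auto simp: x_def G_def gc_def)
      show ?thesis using comp[of x] xS SLV \<pi>S[OF xS] Gx by auto
    qed
    have \<pi>out: "\<pi> x \<notin> SL0" if x: "x \<in> V" "x \<notin> SL0" for x
    proof
      assume "\<pi> x \<in> SL0"
      then have "\<pi> (\<pi> x) = \<pi> x" by (rule \<pi>S)
      then have "\<pi> x = x" by (rule \<pi>inj[OF \<pi>L[OF x(1), THEN conjunct2] x(1)])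
      then show False using x \<open>\<pi> x \<in> SL0\<close> by simp
    qed
    have claimA: "\<pi> x = x" if x: "x = 0 \<or> (3 \<le> x \<and> x \<le> p)" and xV: "x \<in> V" for x
    proof -
      have xn: "x \<notin> SL0" using compl_notin x by blast
      have "G x \<le> p - 2" using x by (auto simp: G_def gc_def)
      then have "\<tau> (G x) = G x" using \<tau>1[OF GV[OF xV]] p2 ps by simp
      then have "G (\<pi> x) = G x" using comp[OF xV] by simp
      then show ?thesis using Ginj[of "\<pi> x" x] \<pi>L[OF xV] \<pi>out[OF xV xn] xV xn by blast
    qed
    have \<pi>fix: "\<pi> x = x" if xV: "x \<in> V" for x
    proof (cases "x \<in> SL0")
      case True then show ?thesis by (rule \<pi>S)
    next
      case False
      then consider "x = 0 \<or> (3 \<le> x \<and> x \<le> p)" | "x = 2*p-1" using compl[OF xV False] by blast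
      then show ?thesis
      proof cases
        case 1 then show ?thesis by (rule claimA[OF _ xV])
      next
        case 2
        have z: "\<pi> x \<in> V" "\<pi> x \<notin> SL0" using \<pi>L[OF xV] \<pi>out[OF xV False] by auto
        show ?thesis
        proof (rule ccontr)
          assume ne: "\<pi> x \<noteq> x"
          then have "\<pi> x = 0 \<or> (3 \<le> \<pi> x \<and> \<pi> x \<le> p)" using compl[OF z] 2 ne by auto
          then have "\<pi> (\<pi> x) = \<pi> x" by (rule claimA[OF _ z(1)])
          then have "\<pi> x = x" by (rule \<pi>inj[OF z(1) xV])
          then show False using ne by simp
        qed
      qed
    qed
    have \<tau>fix: "\<tau> y = y" if yV: "y \<in> V" for y
    proof -
      have img: "\<tau> y = y" if "y < s" for y
      proof -
        have "y \<in> G ` V" using gc_img[OF p2 ps] that by (simp add: G_def V_def)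
        then obtain x where "x \<in> V" "y = G x" by blast
        then show ?thesis using comp \<pi>fix by simp
      qed
      show ?thesis
      proof (cases "y = s")
        case False
        then show ?thesis using img[of y] \<tau>1[OF yV] ps p2 by (cases "y < s") auto
      next
        case True
        show ?thesis
        proof (rule ccontr)
          assume ne: "\<tau> y \<noteq> y"
          have tV: "\<tau> y \<in> V" using \<tau>R yV by blast
          have "\<tau> (\<tau> y) = \<tau> y"
          proof (cases "\<tau> y < s")
            case True then show ?thesis using img by blast
          next
            case False
            then show ?thesis using \<tau>1[OF tV] ne True p2 ps by simp
          qed
          then show False using \<tau>inj tV yV ne by blast
        qed
      qed
    qed
    show "\<forall>x\<in>fg_verts V. \<sigma> x = x"
      using \<pi>L \<pi>fix \<tau>R \<tau>fix by (auto simp: fg_verts_def)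
  qed
  then show ?thesis by (simp add: V_def E_def G_def SL0_def SR0_def)
qed


theorem proposition3p5:
  fixes s :: nat
  assumes "s \<ge> 2"
  shows "let M = {m. m \<ge> s + 2 \<and>
              (\<exists>g. g ` K_verts m \<subseteq> K_verts m \<and> card (g ` K_verts m) = s \<and>
                   fix_number (K_verts m) K_edge =
                   fix_number (fg_verts (K_verts m)) (fg_edge K_edge g))}
         in card M = s - 1 \<and> M = {s + 2 .. 2 * s}"
proof -
  define M where "M = {m. m \<ge> s + 2 \<and>
              (\<exists>g. g ` K_verts m \<subseteq> K_verts m \<and> card (g ` K_verts m) = s \<and>
                   fix_number (K_verts m) K_edge =
                   fix_number (fg_verts (K_verts m)) (fg_edge K_edge g))}"
  have "M = {s + 2 .. 2 * s}"
  proof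
    show "M \<subseteq> {s + 2 .. 2 * s}"
    proof
      fix m assume "m \<in> M"
      then obtain g where m: "m \<ge> s + 2" and gV: "g ` K_verts m \<subseteq> K_verts m"
        and cg: "card (g ` K_verts m) = s"
        and eq: "fix_number (K_verts m) K_edge = fix_number (fg_verts (K_verts m)) (fg_edge K_edge g)"
        unfolding M_def by blast
      have fk: "fix_number (K_verts m) K_edge = m - 1" using fix_K m by simp
      have "card (K_verts m) - card (g ` K_verts m) + (card (K_verts m) - card (g ` K_verts m) - 1)
             \<le> fix_number (fg_verts (K_verts m)) (fg_edge K_edge g)"
        by (rule fix_number_ge, rule fg_lower_general) (use gV in \<open>auto simp: K_verts_def\<close>)
      then have "m - s + (m - s - 1) \<le> m - 1" using cg eq fk by (simp add: K_verts_def)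
      then have "m \<le> 2 * s" using m by linarith
      then show "m \<in> {s + 2 .. 2 * s}" using m by simp
    qed
    show "{s + 2 .. 2 * s} \<subseteq> M"
    proof
      fix m assume m: "m \<in> {s + 2 .. 2 * s}"
      define p where "p = m - s"
      have p2: "2 \<le> p" and ps: "p \<le> s" and mp: "m = s + p" using m by (auto simp: p_def)
      have img: "gc p ` K_verts m = {0..<s}" using gc_img[OF p2 ps] by (simp add: mp K_verts_def)
      have fk: "fix_number (K_verts m) K_edge = m - 1" using fix_K m by simp
      have ff: "fix_number (fg_verts (K_verts m)) (fg_edge K_edge (gc p)) = m - 1"
        unfolding mp K_verts_def
        by (rule fix_number_eq[OF gc_upper[OF p2 ps] gc_upper_card[OF p2 ps] gc_lower[OF p2 ps]])
      have "{0..<s} \<subseteq> K_verts m" by (auto simp: mp K_verts_def)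
      then have sub: "gc p ` K_verts m \<subseteq> K_verts m" by (simp only: img)
      have cimg: "card (gc p ` K_verts m) = s" by (simp only: img card_atLeastLessThan)
      show "m \<in> M" unfolding M_def
      proof (simp only: mem_Collect_eq, intro conjI exI)
        show "s + 2 \<le> m" using m by simp
        show "gc p ` K_verts m \<subseteq> K_verts m" by (rule sub)
        show "card (gc p ` K_verts m) = s" by (rule cimg)
        show "fix_number (K_verts m) K_edge = fix_number (fg_verts (K_verts m)) (fg_edge K_edge (gc p))"
          using fk ff by simp
      qed
    qed
  qed
  moreover have "card {s + 2 .. 2 * s} = s - 1" using assms by simp
  ultimately show ?thesis unfolding M_def Let_def by simp
qed

end
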